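(* Let $\boldsymbol A$ be sampled from the planted dense $m\times n$-submatrix model with planted sets $\bar U,\bar V$ ($|\bar U|=m\le n=|\bar V|$), probabilities $q>p$, and let $\gamma>0$. For $i\in\bar U$ let $\bar\mu_i$ be the number of zero entries of $\boldsymbol A$ in row $i$ among the columns $\bar V$; for $j\in\bar V$ let $\bar\nu_j$ be the number of zero entries of $\boldsymbol A$ in column $j$ among the rows $\bar U$; let $s=\sum_{i\in\bar U}\bar\mu_i$. Set $$ \tau=12\left(1+\frac1{\sqrt m}\right)\max\left\{\sqrt{\sigma_q^2\frac{\log N}{m}},\ \frac{\log N}{m}\right\},\qquad \tilde\lambda=\gamma(1-q)+\gamma\tau, $$ and for $i\in\bar U$, $j\in\bar V$ define $\Lambda_{ij}=y_i+z_j$, where $$ y_i=\frac1n\left(\tilde\lambda\frac{n^2}{m+n}-\gamma\bar\mu_i+\gamma\frac{s}{m+n}\right),\qquad z_j=\frac1m\left(\tilde\lambda\frac{m^2}{m+n}-\gamma\bar\nu_j+\gamma\frac{s}{m+n}\right). $$ Then with high probability $\Lambda_{ij}\ge 0$ for all $i\in\bar U$, $j\in\bar V$.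
   Context: Planted dense $m\times n$-submatrix model: a random $M\times N$ binary matrix $\boldsymbol A$ with $M\le N$, in which entries indexed by $\bar U\times\bar V$ equal $1$ independently with probability $q$ and all other entries equal $1$ independently with probability $p<q$. $\sigma_q^2=q(1-q)$. Parameters may depend on $N$; "with high probability" means with probability at least $1-\hat c_1N^{-\hat c_2}$ for constants $\hat c_1,\hat c_2>0$, as $N\to\infty$. *)

theory Defs
  imports "HOL-Probability.Probability"
begin

text \<open>A binary M x N matrix is a function from index pairs to bool (True = entry 1).
Rows are indexed by {..<M}, columns by {..<N}.\<close>

definition planted_pmf ::
  "nat \<Rightarrow> nat \<Rightarrow> nat set \<Rightarrow> nat set \<Rightarrow> real \<Rightarrow> real \<Rightarrow> (nat \<times> nat \<Rightarrow> bool) pmf" where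
  "planted_pmf M N U V p q =
     Pi_pmf ({..<M} \<times> {..<N}) False
       (\<lambda>(i, j). bernoulli_pmf (if i \<in> U \<and> j \<in> V then q else p))"

definition sigma_sq :: "real \<Rightarrow> real" where
  "sigma_sq q = q * (1 - q)"

definition row_zeros :: "(nat \<times> nat \<Rightarrow> bool) \<Rightarrow> nat set \<Rightarrow> nat \<Rightarrow> nat" where
  "row_zeros A V i = card {j \<in> V. \<not> A (i, j)}"

definition col_zeros :: "(nat \<times> nat \<Rightarrow> bool) \<Rightarrow> nat set \<Rightarrow> nat \<Rightarrow> nat" where
  "col_zeros A U j = card {i \<in> U. \<not> A (i, j)}"

definition tau :: "nat \<Rightarrow> nat \<Rightarrow> real \<Rightarrow> real" where
  "tau N m q = 12 * (1 + 1 / sqrt (real m)) *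
      max (sqrt (sigma_sq q * ln (real N) / real m)) (ln (real N) / real m)"

definition lambda_tilde :: "nat \<Rightarrow> nat \<Rightarrow> real \<Rightarrow> real \<Rightarrow> real" where
  "lambda_tilde N m q \<gamma> = \<gamma> * (1 - q) + \<gamma> * tau N m q"

definition Lambda ::
  "nat \<Rightarrow> nat set \<Rightarrow> nat set \<Rightarrow> real \<Rightarrow> real \<Rightarrow> (nat \<times> nat \<Rightarrow> bool) \<Rightarrow> nat \<Rightarrow> nat \<Rightarrow> real" where
  "Lambda N U V q \<gamma> A i j =
     (let m = real (card U); n = real (card V);
          lt = lambda_tilde N (card U) q \<gamma>;
          s = real (\<Sum>i'\<in>U. row_zeros A V i');
          y = (1 / n) * (lt * n\<^sup>2 / (m + n) - \<gamma> * real (row_zeros A V i) + \<gamma> * s / (m + n));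
          z = (1 / m) * (lt * m\<^sup>2 / (m + n) - \<gamma> * real (col_zeros A U j) + \<gamma> * s / (m + n))
      in y + z)"

end

theory Submission
  imports Defs
begin


lemma exp_sq_bound:
  fixes s :: real assumes "\<bar>s\<bar> \<le> 1" shows "exp s \<le> 1 + s + s\<^sup>2"
proof (cases "s \<ge> 0")
  case True then show ?thesis using assms exp_bound by simp
next
  case False
  define y where "y = - s"
  have y: "0 \<le> y" "y \<le> 1" using False assms by (auto simp: y_def)
  have e: "1 + y + y\<^sup>2/2 \<le> exp y" by (rule exp_lower_Taylor_quadratic) (use y in auto)
  have pos: "0 < 1 + y + y\<^sup>2/2" using y by (simp add: add_pos_nonneg)
  have "exp s = 1 / exp y" by (simp add: y_def exp_minus field_simps)
  also have "\<dots> \<le> 1 / (1 + y + y\<^sup>2/2)" using e pos by (simp add: frac_le)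
  also have "\<dots> \<le> 1 - y + y\<^sup>2"
  proof -
    have eq: "(1 - y + y\<^sup>2) * (1 + y + y\<^sup>2/2) = 1 + y\<^sup>2/2 + y^3/2 + y^4/2"
      by (simp add: field_simps eval_nat_numeral)
    have "0 \<le> y\<^sup>2/2 + y^3/2 + y^4/2" using y by simp
    then have "1 \<le> (1 - y + y\<^sup>2) * (1 + y + y\<^sup>2/2)" unfolding eq by linarith
    then show ?thesis using pos by (simp add: divide_le_eq)
  qed
  finally show ?thesis by (simp add: y_def)
qed

lemma mgf_bound:
  fixes r s :: real assumes "0 \<le> r" "r \<le> 1" "\<bar>s\<bar> \<le> 1"
  shows "(1 - r + r * exp s) * exp (- s * r) \<le> exp (2 * r * (1 - r) * s\<^sup>2)"
proof -
  have b1: "(1 - r + r * exp s) * exp (- s * r) \<le> exp (r * s\<^sup>2)"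
  proof -
    have "1 - r + r * exp s = 1 + r * (exp s - 1)" by (simp add: algebra_simps)
    also have "\<dots> \<le> exp (r * (exp s - 1))" by (rule exp_ge_add_one_self)
    also have "\<dots> \<le> exp (r * (s + s\<^sup>2))"
      using exp_sq_bound[OF assms(3)] assms by (simp add: mult_left_mono)
    finally have "(1 - r + r * exp s) * exp (- s * r) \<le> exp (r * (s + s\<^sup>2)) * exp (- s * r)"
      by (simp add: mult_right_mono)
    also have "\<dots> = exp (r * s\<^sup>2)" by (simp add: exp_add[symmetric] algebra_simps)
    finally show ?thesis .
  qed
  have b2: "(1 - r + r * exp s) * exp (- s * r) \<le> exp ((1 - r) * s\<^sup>2)"
  proof -
    have as: "\<bar>-s\<bar> \<le> 1" using assms by simp
    have eq: "(1 - r + r * exp s) * exp (- s * r) = (1 + (1 - r) * (exp (-s) - 1)) * exp (s * (1 - r))"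
      by (simp add: algebra_simps exp_add[symmetric] exp_minus_inverse exp_diff) (simp add: exp_minus field_simps exp_add[symmetric])
    have "1 + (1 - r) * (exp (-s) - 1) \<le> exp ((1 - r) * (exp (-s) - 1))" by (rule exp_ge_add_one_self)
    also have "\<dots> \<le> exp ((1 - r) * (-s + s\<^sup>2))"
      using exp_sq_bound[OF as] assms by (simp add: mult_left_mono)
    finally have "(1 + (1 - r) * (exp (-s) - 1)) * exp (s * (1 - r)) \<le> exp ((1 - r) * (-s + s\<^sup>2)) * exp (s * (1 - r))"
      by (simp add: mult_right_mono)
    also have "\<dots> = exp ((1 - r) * s\<^sup>2)" by (simp add: exp_add[symmetric] algebra_simps)
    finally show ?thesis using eq by simp
  qed
  have "min r (1 - r) \<le> 2 * r * (1 - r)"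
  proof (cases "2 * r \<le> 1")
    case True
    have "0 \<le> r * (1 - 2 * r)" using True assms by simp
    then show ?thesis using True by (simp add: min_def algebra_simps)
  next
    case False
    have "0 \<le> (1 - r) * (2 * r - 1)" using False assms by simp
    then show ?thesis using False by (simp add: min_def algebra_simps)
  qed
  then have "min r (1 - r) * s\<^sup>2 \<le> 2 * r * (1 - r) * s\<^sup>2" by (simp add: mult_right_mono)
  moreover have "(1 - r + r * exp s) * exp (- s * r) \<le> exp (min r (1 - r) * s\<^sup>2)"
    using b1 b2 by (auto simp: min_def)
  ultimately show ?thesis by (meson exp_le_cancel_iff order_trans)
qed


lemma exp_card_prod:
  assumes "finite I" "S \<subseteq> I"
  shows "exp (s * real (card {x\<in>S. \<not> f x})) = (\<Prod>x\<in>I. (if x \<in> S \<and> \<not> f x then exp s else 1))"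
proof -
  have fin: "finite S" using assms finite_subset by blast
  have "(\<Prod>x\<in>I. (if x \<in> S \<and> \<not> f x then exp s else 1)) = (\<Prod>x\<in>{x\<in>I. x \<in> S \<and> \<not> f x}. exp s)"
    using assms(1) by (simp only: prod.inter_filter)
  also have "{x\<in>I. x \<in> S \<and> \<not> f x} = {x\<in>S. \<not> f x}" using assms(2) by blast
  also have "(\<Prod>x\<in>{x\<in>S. \<not> f x}. exp s) = exp s ^ card {x\<in>S. \<not> f x}" by simp
  also have "\<dots> = exp (real (card {x\<in>S. \<not> f x}) * s)" by (simp add: exp_of_nat_mult)
  finally show ?thesis by (simp add: mult.commute)
qed

lemma mgf_zeros:
  assumes "finite I" "S \<subseteq> I" "\<And>x. x \<in> S \<Longrightarrow> pp x = bernoulli_pmf q" "0 \<le> q" "q \<le> 1"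
  shows "measure_pmf.expectation (Pi_pmf I d pp) (\<lambda>f. exp (s * real (card {x\<in>S. \<not> f x})))
           = (1 - (1 - q) + (1 - q) * exp s) ^ card S"
proof -
  define g where "g = (\<lambda>x (b::bool). if x \<in> S \<and> \<not> b then exp s else 1)"
  have "measure_pmf.expectation (Pi_pmf I d pp) (\<lambda>f. exp (s * real (card {x\<in>S. \<not> f x})))
      = measure_pmf.expectation (Pi_pmf I d pp) (\<lambda>f. \<Prod>x\<in>I. g x (f x))"
    using exp_card_prod[OF assms(1,2)] by (simp add: g_def)
  also have "\<dots> = (\<Prod>x\<in>I. measure_pmf.expectation (pp x) (\<lambda>v. g x v))"
    by (rule expectation_prod_Pi_pmf[OF assms(1)])
       (auto simp: g_def intro!: integrable_measure_pmf_finite)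
  also have "\<dots> = (\<Prod>x\<in>I. if x \<in> S then (1 - (1 - q) + (1 - q) * exp s) else 1)"
    using assms by (intro prod.cong refl) (auto simp: g_def integral_bernoulli_pmf)
  also have "\<dots> = (1 - (1 - q) + (1 - q) * exp s) ^ card S"
    using assms(1,2) by (simp add: prod.If_cases Int_absorb1)
  finally show ?thesis .
qed

lemma markov_exp:
  fixes P :: "'a pmf" and X :: "'a \<Rightarrow> real"
  assumes "finite (set_pmf P)" "0 \<le> s"
  shows "measure_pmf.prob P {f. a \<le> X f} \<le> measure_pmf.expectation P (\<lambda>f. exp (s * (X f - a)))"
proof -
  have "measure_pmf.prob P {f. a \<le> X f} = measure_pmf.expectation P (indicator {f. a \<le> X f})"
    by simp
  also have "\<dots> \<le> measure_pmf.expectation P (\<lambda>f. exp (s * (X f - a)))"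
    using assms by (intro integral_mono integrable_measure_pmf_finite)
       (auto simp: indicator_def mult_nonneg_nonneg)
  finally show ?thesis .
qed



lemma finite_set_Pi_pmf_bool:
  fixes pp :: "'a \<Rightarrow> bool pmf"
  assumes "finite I" shows "finite (set_pmf (Pi_pmf I d pp))"
  by (rule finite_subset[OF set_Pi_pmf_subset'[OF assms]]) (intro finite_PiE_dflt assms; simp)

lemma tail_zeros:
  assumes fin: "finite I" "S \<subseteq> I" "\<And>x. x \<in> S \<Longrightarrow> pp x = bernoulli_pmf q" "0 \<le> q" "q \<le> 1"
    and s: "0 \<le> s" "s \<le> 1"
  shows "measure_pmf.prob (Pi_pmf I d pp) {f. real (card S) * (1 - q + t) \<le> real (card {x\<in>S. \<not> f x})}
           \<le> exp (real (card S) * (2 * q * (1 - q) * s\<^sup>2 - s * t))"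
    and "measure_pmf.prob (Pi_pmf I d pp) {f. real (card {x\<in>S. \<not> f x}) \<le> real (card S) * (1 - q - t)}
           \<le> exp (real (card S) * (2 * q * (1 - q) * s\<^sup>2 - s * t))"
proof -
  define r where "r = 1 - q"
  define k where "k = card S"
  define P where "P = Pi_pmf I d pp"
  define Z where "Z = (\<lambda>f. real (card {x\<in>S. \<not> f x}))"
  have r: "0 \<le> r" "r \<le> 1" using fin by (auto simp: r_def)
  have fs: "finite (set_pmf P)" unfolding P_def by (rule finite_set_Pi_pmf_bool[OF fin(1)])
  have mgf: "measure_pmf.expectation P (\<lambda>f. exp (u * Z f)) = (1 - r + r * exp u) ^ k" for u
    unfolding P_def Z_def k_def r_def by (rule mgf_zeros[OF fin])
  have key: "(1 - r + r * exp u) ^ k * exp (u * (- real k * r)) * exp (- s * real k * t)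
       \<le> exp (real k * (2 * q * (1 - q) * s\<^sup>2 - s * t))" if u: "\<bar>u\<bar> = s" for u
  proof -
    have "(1 - r + r * exp u) ^ k * exp (u * (- real k * r)) = ((1 - r + r * exp u) * exp (- u * r)) ^ k"
    proof -
      have "exp (u * (- real k * r)) = exp (- u * r) ^ k"
        by (simp add: exp_of_nat_mult[symmetric] mult_ac)
      then show ?thesis by (simp add: power_mult_distrib)
    qed
    also have "\<dots> \<le> exp (2 * r * (1 - r) * u\<^sup>2) ^ k"
      using r s u by (intro power_mono mgf_bound) (auto intro!: mult_nonneg_nonneg add_nonneg_nonneg)
    also have "\<dots> = exp (real k * (2 * q * (1 - q) * s\<^sup>2))"
      using u by (simp add: exp_of_nat_mult[symmetric] r_def algebra_simps power2_eq_square abs_mult_self_eq)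
        (metis abs_mult_self_eq mult.assoc mult.commute)
    finally have "(1 - r + r * exp u) ^ k * exp (u * (- real k * r)) * exp (- s * real k * t)
        \<le> exp (real k * (2 * q * (1 - q) * s\<^sup>2)) * exp (- s * real k * t)"
      by (simp add: mult_right_mono)
    also have "\<dots> = exp (real k * (2 * q * (1 - q) * s\<^sup>2 - s * t))"
      by (simp add: exp_add[symmetric] algebra_simps)
    finally show ?thesis .
  qed
  have "measure_pmf.prob P {f. real k * (1 - q + t) \<le> Z f}
      \<le> measure_pmf.expectation P (\<lambda>f. exp (s * (Z f - real k * (1 - q + t))))"
    by (rule markov_exp[OF fs s(1)])
  also have "\<dots> = measure_pmf.expectation P (\<lambda>f. exp (s * Z f) * exp (s * (- real k * r)) * exp (- s * real k * t))"
    by (intro Bochner_Integration.integral_cong refl) (simp add: exp_add[symmetric] r_def algebra_simps)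
  also have "\<dots> = (1 - r + r * exp s) ^ k * exp (s * (- real k * r)) * exp (- s * real k * t)"
    by (simp add: mgf)
  also have "\<dots> \<le> exp (real k * (2 * q * (1 - q) * s\<^sup>2 - s * t))"
    by (rule key) (use s in simp)
  finally show "measure_pmf.prob (Pi_pmf I d pp) {f. real (card S) * (1 - q + t) \<le> real (card {x\<in>S. \<not> f x})}
           \<le> exp (real (card S) * (2 * q * (1 - q) * s\<^sup>2 - s * t))"
    by (simp add: P_def Z_def k_def)
  have "measure_pmf.prob P {f. Z f \<le> real k * (1 - q - t)} = measure_pmf.prob P {f. - real k * (1 - q - t) \<le> - Z f}"
    by simp
  also have "\<dots> \<le> measure_pmf.expectation P (\<lambda>f. exp (s * (- Z f - (- real k * (1 - q - t)))))"
    by (rule markov_exp[OF fs s(1)])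
  also have "\<dots> = measure_pmf.expectation P (\<lambda>f. exp ((- s) * Z f) * exp ((- s) * (- real k * r)) * exp (- s * real k * t))"
    by (intro Bochner_Integration.integral_cong refl) (simp add: exp_add[symmetric] r_def algebra_simps)
  also have "\<dots> = (1 - r + r * exp (- s)) ^ k * exp ((- s) * (- real k * r)) * exp (- s * real k * t)"
    using mgf[of "- s"] by simp
  also have "\<dots> \<le> exp (real k * (2 * q * (1 - q) * s\<^sup>2 - s * t))"
    by (rule key) (use s in simp)
  finally show "measure_pmf.prob (Pi_pmf I d pp) {f. real (card {x\<in>S. \<not> f x}) \<le> real (card S) * (1 - q - t)}
           \<le> exp (real (card S) * (2 * q * (1 - q) * s\<^sup>2 - s * t))"
    by (simp add: P_def Z_def k_def)
qed



lemma choose_s: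
  fixes \<sigma> L m k t :: real
  assumes "0 \<le> \<sigma>" "0 \<le> L" "0 < m" "m \<le> k" "9 * \<sigma> * L / m \<le> t\<^sup>2" "3 * L / m \<le> t"
  shows "\<exists>s. 0 \<le> s \<and> s \<le> 1 \<and> k * (2 * \<sigma> * s\<^sup>2 - s * t) \<le> - (9/8) * L"
proof -
  have t0: "0 \<le> t" using assms by (smt (verit) divide_nonneg_pos)
  have mt: "3 * L \<le> m * t" using assms by (simp add: divide_le_eq mult.commute)
  have kt: "m * t \<le> k * t" using assms t0 by (simp add: mult_right_mono)
  show ?thesis
  proof (cases "0 < \<sigma> \<and> t \<le> 4 * \<sigma>")
    case True
    define s where "s = t / (4 * \<sigma>)"
    have s: "0 \<le> s" "s \<le> 1" using True t0 by (auto simp: s_def)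
    have eq: "2 * \<sigma> * s\<^sup>2 - s * t = - (t\<^sup>2 / (8 * \<sigma>))"
      using True by (simp add: s_def field_simps power2_eq_square)
    have mt2: "9 * \<sigma> * L \<le> m * t\<^sup>2" using assms by (simp add: divide_le_eq mult.commute)
    have "m * t\<^sup>2 \<le> k * t\<^sup>2" using assms by (simp add: mult_right_mono)
    then have "9 * \<sigma> * L \<le> k * t\<^sup>2" using mt2 by linarith
    then have "9 * L / 8 \<le> k * (t\<^sup>2 / (8 * \<sigma>))" using True by (simp add: field_simps)
    then show ?thesis using s eq by (intro exI[of _ s]) auto
  next
    case False
    then have "2 * \<sigma> \<le> t / 2" using assms t0 by auto
    then have "k * (2 * \<sigma> * 1\<^sup>2 - 1 * t) \<le> k * (- t / 2)"
      using assms by (intro mult_left_mono) auto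
    then show ?thesis using mt kt assms by (intro exI[of _ 1]) auto
  qed
qed

lemma tail_final:
  assumes fin: "finite I" "S \<subseteq> I" "\<And>x. x \<in> S \<Longrightarrow> pp x = bernoulli_pmf q" "0 \<le> q" "q \<le> 1"
    and N: "1 \<le> (N::real)" and m: "0 < m" "m \<le> real (card S)"
    and t: "9 * (q * (1 - q)) * ln N / m \<le> t\<^sup>2" "3 * ln N / m \<le> t"
  shows "measure_pmf.prob (Pi_pmf I d pp) {f. real (card S) * (1 - q + t) \<le> real (card {x\<in>S. \<not> f x})}
           \<le> N powr (- 9/8)"
    and "measure_pmf.prob (Pi_pmf I d pp) {f. real (card {x\<in>S. \<not> f x}) \<le> real (card S) * (1 - q - t)}
           \<le> N powr (- 9/8)"
proof -
  have "0 \<le> q * (1 - q)" using fin by simp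
  moreover have "0 \<le> ln N" using N by simp
  ultimately obtain s where s: "0 \<le> s" "s \<le> 1"
    and b: "real (card S) * (2 * (q * (1 - q)) * s\<^sup>2 - s * t) \<le> - (9/8) * ln N"
    using choose_s[of "q * (1 - q)" "ln N" m "real (card S)" t] m t by blast
  have e: "exp (real (card S) * (2 * q * (1 - q) * s\<^sup>2 - s * t)) \<le> N powr (- 9/8)"
    using b N by (simp add: powr_def mult_ac)
  show "measure_pmf.prob (Pi_pmf I d pp) {f. real (card S) * (1 - q + t) \<le> real (card {x\<in>S. \<not> f x})}
           \<le> N powr (- 9/8)"
    using tail_zeros(1)[where I=I and S=S and pp=pp and q=q and s=s and t=t and d=d, OF fin s] e by linarith
  show "measure_pmf.prob (Pi_pmf I d pp) {f. real (card {x\<in>S. \<not> f x}) \<le> real (card S) * (1 - q - t)}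
           \<le> N powr (- 9/8)"
    using tail_zeros(2)[where I=I and S=S and pp=pp and q=q and s=s and t=t and d=d, OF fin s] e by linarith
qed

lemma Lambda_alg:
  fixes m n lt g mu nu s :: real
  assumes "0 < m" "0 < n"
  shows "(1 / n) * (lt * n\<^sup>2 / (m + n) - g * mu + g * s / (m + n)) +
         (1 / m) * (lt * m\<^sup>2 / (m + n) - g * nu + g * s / (m + n))
       = lt - g * mu / n - g * nu / m + g * s / (m * n)"
proof -
  have mn: "m + n \<noteq> 0" using assms by auto
  have 1: "(1 / n) * (lt * n\<^sup>2 / (m + n)) + (1 / m) * (lt * m\<^sup>2 / (m + n)) = lt"
  proof -
    have a: "(1 / n) * (lt * n\<^sup>2 / (m + n)) = lt * n / (m + n)" using assms by (simp add: power2_eq_square)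
    have b: "(1 / m) * (lt * m\<^sup>2 / (m + n)) = lt * m / (m + n)" using assms by (simp add: power2_eq_square)
    have "lt * n / (m + n) + lt * m / (m + n) = lt * (m + n) / (m + n)"
      by (simp add: add_divide_distrib[symmetric] algebra_simps)
    also have "\<dots> = lt" using mn by simp
    finally show ?thesis using a b by simp
  qed
  have 2: "(1 / n) * (g * s / (m + n)) + (1 / m) * (g * s / (m + n)) = g * s / (m * n)"
  proof -
    have "1 / n + 1 / m = (m + n) / (m * n)" using assms by (simp add: field_simps)
    then have "(1 / n) * (g * s / (m + n)) + (1 / m) * (g * s / (m + n)) = (m + n) / (m * n) * (g * s / (m + n))"
      by (metis distrib_right)
    also have "\<dots> = g * s / (m * n)" using mn by simp
    finally show ?thesis .
  qed
  show ?thesis using 1 2 by (simp add: algebra_simps)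
qed

lemma Lambda_nonneg:
  assumes U: "finite U" "U \<noteq> {}" and V: "finite V" "V \<noteq> {}" and g: "0 < \<gamma>"
    and t: "0 \<le> t" "tau N (card U) q = 4 * t"
    and col: "\<And>j. j \<in> V \<Longrightarrow> real (col_zeros A U j) \<le> real (card U) * (1 - q + t)"
    and rowu: "\<And>i. i \<in> U \<Longrightarrow> real (row_zeros A V i) \<le> real (card V) * (1 - q + t)"
    and rowl: "\<And>i. i \<in> U \<Longrightarrow> real (card V) * (1 - q - t) \<le> real (row_zeros A V i)"
    and ij: "i \<in> U" "j \<in> V"
  shows "0 \<le> Lambda N U V q \<gamma> A i j"
proof -
  define m where "m = real (card U)"
  define n where "n = real (card V)"
  define s where "s = real (\<Sum>i'\<in>U. row_zeros A V i')"
  define lt where "lt = lambda_tilde N (card U) q \<gamma>"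
  have m: "0 < m" using U by (simp add: m_def card_gt_0_iff)
  have n: "0 < n" using V by (simp add: n_def card_gt_0_iff)
  have lt: "lt = \<gamma> * (1 - q) + \<gamma> * (4 * t)" using t by (simp add: lt_def lambda_tilde_def)
  have "(\<Sum>i'\<in>U. n * (1 - q - t)) \<le> (\<Sum>i'\<in>U. real (row_zeros A V i'))"
    by (intro sum_mono) (use rowl in \<open>simp add: n_def\<close>)
  then have sge: "m * n * (1 - q - t) \<le> s" by (simp add: s_def m_def)
  have L: "Lambda N U V q \<gamma> A i j = lt - \<gamma> * real (row_zeros A V i) / n - \<gamma> * real (col_zeros A U j) / m + \<gamma> * s / (m * n)"
    unfolding Lambda_def Let_def m_def[symmetric] n_def[symmetric] s_def[symmetric] lt_def[symmetric]
    by (rule Lambda_alg[OF m n])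
  have a1: "\<gamma> * real (row_zeros A V i) / n \<le> \<gamma> * (1 - q + t)"
    using rowu[OF ij(1)] g n by (simp add: n_def divide_le_eq mult_left_mono mult.commute mult.left_commute)
  have a2: "\<gamma> * real (col_zeros A U j) / m \<le> \<gamma> * (1 - q + t)"
    using col[OF ij(2)] g m by (simp add: m_def divide_le_eq mult_left_mono mult.commute mult.left_commute)
  have a3: "\<gamma> * (1 - q - t) \<le> \<gamma> * s / (m * n)"
    using sge g m n by (simp add: le_divide_eq mult_left_mono mult.commute mult.left_commute)
  have "0 \<le> \<gamma> * t" using g t by simp
  then show ?thesis using L a1 a2 a3 lt by (simp add: algebra_simps)
qed



lemma card_row: "card {x\<in>{i}\<times>V. \<not> A x} = row_zeros A V i"
proof -
  have "{x\<in>{i}\<times>V. \<not> A x} = Pair i ` {j\<in>V. \<not> A (i, j)}" by auto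
  moreover have "inj_on (Pair i) {j\<in>V. \<not> A (i, j)}" by (auto simp: inj_on_def)
  ultimately show ?thesis by (simp add: card_image row_zeros_def)
qed

lemma card_col: "card {x\<in>U\<times>{j}. \<not> A x} = col_zeros A U j"
proof -
  have "{x\<in>U\<times>{j}. \<not> A x} = (\<lambda>i. (i, j)) ` {i\<in>U. \<not> A (i, j)}" by auto
  moreover have "inj_on (\<lambda>i. (i, j)) {i\<in>U. \<not> A (i, j)}" by (auto simp: inj_on_def)
  ultimately show ?thesis by (simp add: card_image col_zeros_def)
qed

theorem mainTheorem4:
  "\<exists>c1 c2 :: real. c1 > 0 \<and> c2 > 0 \<and>
    (\<forall>(M::nat) (N::nat) (U::nat set) (V::nat set) (p::real) (q::real) (\<gamma>::real).
       M \<le> N \<longrightarrow> U \<subseteq> {..<M} \<longrightarrow> V \<subseteq> {..<N} \<longrightarrow> U \<noteq> {} \<longrightarrow>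
       card U \<le> card V \<longrightarrow> 0 \<le> p \<longrightarrow> p < q \<longrightarrow> q \<le> 1 \<longrightarrow> \<gamma> > 0 \<longrightarrow>
       measure_pmf.prob (planted_pmf M N U V p q)
         {A. \<forall>i\<in>U. \<forall>j\<in>V. Lambda N U V q \<gamma> A i j \<ge> 0}
       \<ge> 1 - c1 * real N powr (- c2))"
proof (rule exI[of _ 3], rule exI[of _ "1/8"], intro conjI allI impI)
  fix M N :: nat and U V :: "nat set" and p q \<gamma> :: real
  assume MN: "M \<le> N" and UM: "U \<subseteq> {..<M}" and VN: "V \<subseteq> {..<N}" and Une: "U \<noteq> {}"
    and UV: "card U \<le> card V" and p0: "0 \<le> p" and pq: "p < q" and q1: "q \<le> 1" and g: "\<gamma> > 0"
  have q0: "0 \<le> q" using p0 pq by simp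
  have finU: "finite U" using UM finite_subset by blast
  have finV: "finite V" using VN finite_subset by blast
  obtain i0 where "i0 \<in> U" using Une by blast
  then have N1: "1 \<le> N" using UM MN by auto
  have Nr: "1 \<le> real N" using N1 by simp
  define m where "m = card U"
  define n where "n = card V"
  have m0: "0 < m" using finU Une by (simp add: m_def card_gt_0_iff)
  have mn: "m \<le> n" using UV by (simp add: m_def n_def)
  have Vne: "V \<noteq> {}" using m0 mn n_def by auto
  have mN: "m \<le> N" using card_mono[OF _ UM] MN by (simp add: m_def)
  have nN: "n \<le> N" using card_mono[OF _ VN] by (simp add: n_def)
  define L where "L = ln (real N)"
  have L0: "0 \<le> L" using Nr by (simp add: L_def)
  define a where "a = sqrt (sigma_sq q * L / real m)"
  define b where "b = L / real m"
  have sig0: "0 \<le> sigma_sq q" using q0 q1 by (simp add: sigma_sq_def)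
  have a0: "0 \<le> a" using sig0 L0 m0 by (simp add: a_def)
  have b0: "0 \<le> b" using L0 m0 by (simp add: b_def)
  define t where "t = tau N m q / 4"
  have tdef: "t = 3 * (1 + 1 / sqrt (real m)) * max a b"
    by (simp add: t_def tau_def a_def b_def L_def)
  have "max a b \<le> (1 + 1 / sqrt (real m)) * max a b"
    using a0 b0 by (simp add: mult_le_cancel_right1)
  then have "3 * max a b \<le> 3 * ((1 + 1 / sqrt (real m)) * max a b)" by linarith
  then have tmax: "3 * max a b \<le> t" using tdef by (simp only: mult.assoc)
  have t0: "0 \<le> t" using tmax a0 by linarith
  have tb: "3 * L / real m \<le> t" using tmax by (simp add: b_def)
  have ta: "3 * a \<le> t" using tmax by simp
  then have "(3 * a)\<^sup>2 \<le> t\<^sup>2" using a0 by (intro power_mono) auto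
  moreover have "a\<^sup>2 = sigma_sq q * L / real m" using sig0 L0 m0 by (simp add: a_def)
  ultimately have ta2: "9 * (q * (1 - q)) * L / real m \<le> t\<^sup>2"
    by (simp add: power_mult_distrib sigma_sq_def)
  define I where "I = {..<M} \<times> {..<N}"
  define pp where "pp = (\<lambda>(i, j). bernoulli_pmf (if i \<in> U \<and> j \<in> V then q else p))"
  define P where "P = planted_pmf M N U V p q"
  have P: "P = Pi_pmf I False pp" by (simp add: P_def planted_pmf_def I_def pp_def)
  have finI: "finite I" by (simp add: I_def)
  define X where "X = real N powr (- 9/8)"
  define Bc where "Bc = (\<lambda>j. {A. real m * (1 - q + t) \<le> real (col_zeros A U j)})"
  define Bu where "Bu = (\<lambda>i. {A. real n * (1 - q + t) \<le> real (row_zeros A V i)})"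
  define Bl where "Bl = (\<lambda>i. {A. real (row_zeros A V i) \<le> real n * (1 - q - t)})"
  have pBc: "measure_pmf.prob P (Bc j) \<le> X" if j: "j \<in> V" for j
  proof -
    have S: "U \<times> {j} \<subseteq> I" using UM VN j by (auto simp: I_def)
    have "\<And>x. x \<in> U \<times> {j} \<Longrightarrow> pp x = bernoulli_pmf q" using j by (auto simp: pp_def)
    from tail_final(1)[where m="real m" and t=t and d=False, OF finI S this q0 q1 Nr] m0 tb ta2
    show ?thesis by (simp add: P Bc_def X_def card_col card_cartesian_product m_def L_def)
  qed
  have pBu: "measure_pmf.prob P (Bu i) \<le> X" and pBl: "measure_pmf.prob P (Bl i) \<le> X" if i: "i \<in> U" for i
  proof -
    have S: "{i} \<times> V \<subseteq> I" using UM VN i by (auto simp: I_def)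
    have pps: "\<And>x. x \<in> {i} \<times> V \<Longrightarrow> pp x = bernoulli_pmf q" using i by (auto simp: pp_def)
    have cS: "real m \<le> real (card ({i} \<times> V))" using mn by (simp add: card_cartesian_product n_def)
    from tail_final(1)[where m="real m" and t=t and d=False, OF finI S pps q0 q1 Nr _ cS] m0 tb ta2
    show "measure_pmf.prob P (Bu i) \<le> X"
      by (simp add: P Bu_def X_def card_row card_cartesian_product n_def L_def)
    from tail_final(2)[where m="real m" and t=t and d=False, OF finI S pps q0 q1 Nr _ cS] m0 tb ta2
    show "measure_pmf.prob P (Bl i) \<le> X"
      by (simp add: P Bl_def X_def card_row card_cartesian_product n_def L_def)
  qed
  define B where "B = (\<Union>j\<in>V. Bc j) \<union> (\<Union>i\<in>U. Bu i) \<union> (\<Union>i\<in>U. Bl i)"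
  have good: "UNIV - B \<subseteq> {A. \<forall>i\<in>U. \<forall>j\<in>V. Lambda N U V q \<gamma> A i j \<ge> 0}"
  proof (safe)
    fix A i j assume A: "A \<notin> B" and ij: "i \<in> U" "j \<in> V"
    show "0 \<le> Lambda N U V q \<gamma> A i j"
    proof (rule Lambda_nonneg[OF finU Une finV Vne g t0 _ _ _ _ ij])
      show "tau N (card U) q = 4 * t" by (simp add: t_def m_def)
      show "real (col_zeros A U j) \<le> real (card U) * (1 - q + t)" if "j \<in> V" for j
        using A that by (auto simp: B_def Bc_def m_def)
      show "real (row_zeros A V i) \<le> real (card V) * (1 - q + t)" if "i \<in> U" for i
        using A that by (auto simp: B_def Bu_def n_def)
      show "real (card V) * (1 - q - t) \<le> real (row_zeros A V i)" if "i \<in> U" for i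
        using A that by (auto simp: B_def Bl_def n_def)
    qed
  qed
  have "measure_pmf.prob P B \<le> measure_pmf.prob P (\<Union>j\<in>V. Bc j) + measure_pmf.prob P (\<Union>i\<in>U. Bu i)
          + measure_pmf.prob P (\<Union>i\<in>U. Bl i)"
    unfolding B_def
    by (rule order_trans[OF measure_Un_le]) (auto intro: measure_Un_le)
  also have "\<dots> \<le> (\<Sum>j\<in>V. measure_pmf.prob P (Bc j)) + (\<Sum>i\<in>U. measure_pmf.prob P (Bu i))
          + (\<Sum>i\<in>U. measure_pmf.prob P (Bl i))"
    using finU finV by (intro add_mono measure_pmf.finite_measure_subadditive_finite) auto
  also have "\<dots> \<le> real n * X + real m * X + real m * X"
  proof -
    have "(\<Sum>j\<in>V. measure_pmf.prob P (Bc j)) \<le> of_nat (card V) * X" by (rule sum_bounded_above) (rule pBc)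
    moreover have "(\<Sum>i\<in>U. measure_pmf.prob P (Bu i)) \<le> of_nat (card U) * X" by (rule sum_bounded_above) (rule pBu)
    moreover have "(\<Sum>i\<in>U. measure_pmf.prob P (Bl i)) \<le> of_nat (card U) * X" by (rule sum_bounded_above) (rule pBl)
    ultimately show ?thesis unfolding n_def m_def by linarith
  qed
  also have "\<dots> \<le> 3 * real N * X"
  proof -
    have "0 \<le> X" by (simp add: X_def)
    moreover have "real n + real m + real m \<le> 3 * real N" using mN nN by simp
    ultimately show ?thesis by (metis distrib_right mult_right_mono)
  qed
  also have "\<dots> = 3 * real N powr (- (1/8))"
  proof -
    have "real N * X = real N powr 1 * real N powr (- 9/8)" using Nr by (simp add: X_def)
    also have "\<dots> = real N powr (1 + (- 9/8))" by (rule powr_add[symmetric])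
    also have "\<dots> = real N powr (- (1/8))" by simp
    finally show ?thesis by simp
  qed
  finally have pB: "measure_pmf.prob P B \<le> 3 * real N powr (- (1/8))" .
  have "1 - measure_pmf.prob P B = measure_pmf.prob P (UNIV - B)"
    using measure_pmf.prob_compl[of B P] by simp
  also have "\<dots> \<le> measure_pmf.prob P {A. \<forall>i\<in>U. \<forall>j\<in>V. Lambda N U V q \<gamma> A i j \<ge> 0}"
    by (rule measure_pmf.finite_measure_mono[OF good]) simp
  finally show "1 - 3 * real N powr (- (1/8))
      \<le> measure_pmf.prob (planted_pmf M N U V p q) {A. \<forall>i\<in>U. \<forall>j\<in>V. Lambda N U V q \<gamma> A i j \<ge> 0}"
    using pB by (simp add: P_def)
qed (auto)


end
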